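(* $\chi_i'(S_{C_6}^n)=3$ for every positive integer $n$, where $C_6$ is the cycle on $6$ vertices.
   Context: For a graph $H$ with at least one edge, an injective edge $k$-coloring is a map $c:E(H)\to\{1,\dots,k\}$ such that whenever $e_1=xy$, $e_2=yz$, $e_3=zu$ are edges of $H$ with $x,y,z$ distinct and $u\notin\{y,z\}$ (the case $u=x$ being allowed), we have $c(e_1)\ne c(e_3)$. The injective chromatic index $\chi_i'(H)$ is the least $k$ for which such a coloring exists. For a graph $G$ and positive integer $n$, the generalized Sierpiński graph $S_G^n$ has vertex set $V(G)^n$, and $(u_1,\dots,u_n)$, $(v_1,\dots,v_n)$ are adjacent if and only if there is $d\in\{1,\dots,n\}$ with $u_i=v_i$ for $i<d$, $u_dv_d\in E(G)$, and $u_i=v_d$, $v_i=u_d$ for all $i>d$. *)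

theory Defs
  imports Main
begin

text \<open>A (simple) graph is given by a vertex set V and an adjacency relation adj.
  Edges are the unordered pairs {x,y} with x,y in V and adj x y.\<close>

definition inj_edge_coloring ::
  "'a set \<Rightarrow> ('a \<Rightarrow> 'a \<Rightarrow> bool) \<Rightarrow> ('a set \<Rightarrow> nat) \<Rightarrow> nat \<Rightarrow> bool" where
  "inj_edge_coloring V adj c k \<longleftrightarrow>
     (\<forall>x\<in>V. \<forall>y\<in>V. adj x y \<longrightarrow> c {x, y} \<in> {1..k}) \<and>
     (\<forall>x\<in>V. \<forall>y\<in>V. \<forall>z\<in>V. \<forall>u\<in>V.
        adj x y \<and> adj y z \<and> adj z u \<and> x \<noteq> y \<and> y \<noteq> z \<and> x \<noteq> z
        \<and> u \<noteq> y \<and> u \<noteq> z \<longrightarrow> c {x, y} \<noteq> c {z, u})"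

definition inj_chromatic_index :: "'a set \<Rightarrow> ('a \<Rightarrow> 'a \<Rightarrow> bool) \<Rightarrow> nat" where
  "inj_chromatic_index V adj = (LEAST k. \<exists>c. inj_edge_coloring V adj c k)"

definition sierpinski_verts :: "'a set \<Rightarrow> nat \<Rightarrow> 'a list set" where
  "sierpinski_verts V n = {xs. length xs = n \<and> set xs \<subseteq> V}"

definition sierpinski_adj ::
  "('a \<Rightarrow> 'a \<Rightarrow> bool) \<Rightarrow> nat \<Rightarrow> 'a list \<Rightarrow> 'a list \<Rightarrow> bool" where
  "sierpinski_adj adj n u v \<longleftrightarrow>
     (\<exists>d<n. (\<forall>i<d. u ! i = v ! i) \<and> adj (u ! d) (v ! d) \<and>
            (\<forall>i. d < i \<and> i < n \<longrightarrow> u ! i = v ! d \<and> v ! i = u ! d))"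

definition C6_verts :: "nat set" where
  "C6_verts = {0..<6}"

definition C6_adj :: "nat \<Rightarrow> nat \<Rightarrow> bool" where
  "C6_adj a b \<longleftrightarrow> a < 6 \<and> b < 6 \<and> (b = (a + 1) mod 6 \<or> a = (b + 1) mod 6)"

end

theory Submission
  imports Defs
begin

lemma drop_rep:
  assumes "length u = n" "d < n" "\<forall>i. d < i \<and> i < n \<longrightarrow> u ! i = b"
  shows "drop (Suc d) u = replicate (n - 1 - d) b"
  using assms by (intro nth_equalityI) auto

lemma adj_char:
  assumes "length u = n" "length v = n"
  shows "sierpinski_adj C6_adj n u v \<longleftrightarrow>
    (\<exists>w a b m. u = w @ a # replicate m b \<and> v = w @ b # replicate m a \<and> C6_adj a b)"
proof
  assume "sierpinski_adj C6_adj n u v"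
  then obtain d where d: "d < n" "\<forall>i<d. u ! i = v ! i" "C6_adj (u ! d) (v ! d)"
    "\<forall>i. d < i \<and> i < n \<longrightarrow> u ! i = v ! d \<and> v ! i = u ! d"
    unfolding sierpinski_adj_def by blast
  have tk: "take d v = take d u" using d assms by (intro nth_equalityI) auto
  have u: "u = take d u @ u ! d # replicate (n - 1 - d) (v ! d)"
    using id_take_nth_drop[of d u] drop_rep[of u n d "v ! d"] d assms by auto
  have v: "v = take d u @ v ! d # replicate (n - 1 - d) (u ! d)"
    using id_take_nth_drop[of d v] drop_rep[of v n d "u ! d"] d assms tk by auto
  show "\<exists>w a b m. u = w @ a # replicate m b \<and> v = w @ b # replicate m a \<and> C6_adj a b"
    using u v d by blast
next
  assume "\<exists>w a b m. u = w @ a # replicate m b \<and> v = w @ b # replicate m a \<and> C6_adj a b"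
  then obtain w a b m where u: "u = w @ a # replicate m b" and v: "v = w @ b # replicate m a"
    and ab: "C6_adj a b" by blast
  show "sierpinski_adj C6_adj n u v"
    unfolding sierpinski_adj_def
  proof (intro exI[of _ "length w"] conjI allI impI)
    show "length w < n" using assms u by simp
    show "\<And>i. i < length w \<Longrightarrow> u ! i = v ! i" using u v by (simp add: nth_append)
    show "C6_adj (u ! length w) (v ! length w)" using u v ab by simp
    fix i assume "length w < i \<and> i < n"
    then show "u ! i = v ! length w" "v ! i = u ! length w"
      using u v assms by (auto simp: nth_append nth_Cons split: nat.splits)
  qed
qed


definition oddend :: "nat \<Rightarrow> nat \<Rightarrow> nat" where "oddend a b = (if odd a then a else b)"
definition bcol :: "nat \<Rightarrow> nat \<Rightarrow> nat" where
  "bcol c p = [[1,2,3],[2,1,3],[3,1,2],[3,2,1],[2,3,1],[1,3,2::nat]] ! c ! (p div 2)"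
definition hcol1 :: "nat \<Rightarrow> nat \<Rightarrow> nat" where
  "hcol1 a b = (if even (if b = Suc a mod 6 then a else b) then 1 else 3)"

abbreviation S6 :: "nat set" where "S6 \<equiv> {0,1,2,3,4,5}"

lemma lt6: "x < 6 \<Longrightarrow> x \<in> S6" by auto

lemma adj6: "C6_adj a b \<Longrightarrow> a \<in> S6 \<and> b \<in> S6" unfolding C6_adj_def by auto

lemma adj_ne: "C6_adj a b \<Longrightarrow> a \<noteq> b" unfolding C6_adj_def by (auto simp: mod_Suc split: if_splits)

lemma adj_sym: "C6_adj a b \<Longrightarrow> C6_adj b a" unfolding C6_adj_def by auto

lemma G_sym: "\<forall>a\<in>S6. \<forall>b\<in>S6. C6_adj a b \<longrightarrow> oddend a b = oddend b a \<and> hcol1 a b = hcol1 b a"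
  by (simp add: C6_adj_def oddend_def hcol1_def)

lemma G_range: "\<forall>c\<in>S6. \<forall>p\<in>S6. bcol c p \<in> {1,2,3}"
  by (simp add: bcol_def)

lemma H_range: "\<forall>a\<in>S6. \<forall>b\<in>S6. hcol1 a b \<in> {1,3}"
  by (simp add: hcol1_def)

lemma F1: "\<forall>c\<in>S6. \<forall>a1\<in>S6. \<forall>a2\<in>S6. C6_adj a1 a2 \<longrightarrow>
  (\<forall>b2\<in>S6. C6_adj a2 b2 \<longrightarrow> a1 \<noteq> b2 \<longrightarrow> (\<forall>b3\<in>S6. C6_adj b2 b3 \<longrightarrow> b3 \<noteq> a2 \<longrightarrow>
   bcol c (oddend a1 a2) \<noteq> bcol c (oddend b2 b3)))"
  by (simp add: C6_adj_def bcol_def oddend_def)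

(* m2 = 0, m1 = 0, m3 >= 1 *)
lemma F2a: "\<forall>a1\<in>S6. \<forall>a2\<in>S6. C6_adj a1 a2 \<longrightarrow>
  (\<forall>b2\<in>S6. C6_adj a2 b2 \<longrightarrow> a1 \<noteq> b2 \<longrightarrow> bcol b2 (oddend a1 a2) \<noteq> 2)"
  by (simp add: C6_adj_def bcol_def oddend_def)

lemma F2b: "\<forall>a1\<in>S6. \<forall>a2\<in>S6. C6_adj a1 a2 \<longrightarrow>
  (\<forall>b2\<in>S6. C6_adj a2 b2 \<longrightarrow> a1 \<noteq> b2 \<longrightarrow> (\<forall>a3\<in>S6. C6_adj a3 b2 \<longrightarrow>
    bcol a3 (oddend a1 a2) \<noteq> hcol1 a3 b2))"
  by (simp add: C6_adj_def bcol_def oddend_def hcol1_def)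

(* m2 = 0, m1 >= 1, m3 = 0 *)
lemma F3a: "\<forall>a2\<in>S6. \<forall>b2\<in>S6. C6_adj a2 b2 \<longrightarrow>
  (\<forall>b3\<in>S6. C6_adj b2 b3 \<longrightarrow> b3 \<noteq> a2 \<longrightarrow> 2 \<noteq> bcol a2 (oddend b2 b3))"
  by (simp add: C6_adj_def bcol_def oddend_def)

lemma F3b: "\<forall>a2\<in>S6. \<forall>b2\<in>S6. C6_adj a2 b2 \<longrightarrow>
  (\<forall>b3\<in>S6. C6_adj b2 b3 \<longrightarrow> b3 \<noteq> a2 \<longrightarrow> (\<forall>b1\<in>S6. C6_adj a2 b1 \<longrightarrow>
    hcol1 a2 b1 \<noteq> bcol b1 (oddend b2 b3)))"
  by (simp add: C6_adj_def bcol_def oddend_def hcol1_def)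

lemma Tri: "\<forall>a\<in>S6. \<forall>b\<in>S6. C6_adj a b \<longrightarrow> (\<forall>c\<in>S6. C6_adj b c \<longrightarrow> \<not> C6_adj a c)"
  by (simp add: C6_adj_def)

(* m2 >= 1, m1 = m3 = 0 *)
lemma F4a: "\<forall>a2\<in>S6. \<forall>b2\<in>S6. C6_adj a2 b2 \<longrightarrow>
  (\<forall>a1\<in>S6. C6_adj a1 b2 \<longrightarrow> (\<forall>b3\<in>S6. C6_adj a2 b3 \<longrightarrow>
    bcol a2 (oddend a1 b2) \<noteq> bcol b2 (oddend a2 b3)))"
  by (simp add: C6_adj_def bcol_def oddend_def)

lemma F4b: "\<forall>a2\<in>S6. \<forall>b2\<in>S6. C6_adj a2 b2 \<longrightarrow>
  (\<forall>a1\<in>S6. C6_adj a1 b2 \<longrightarrow> (\<forall>b3\<in>S6. C6_adj a2 b3 \<longrightarrow>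
    bcol b2 (oddend a1 b2) \<noteq> bcol a2 (oddend a2 b3)))"
  by (simp add: C6_adj_def bcol_def oddend_def)


definition lst :: "nat list \<Rightarrow> nat" where "lst w = (if w = [] then 0 else last w)"

definition E :: "nat list \<Rightarrow> nat \<Rightarrow> nat \<Rightarrow> nat \<Rightarrow> nat" where
  "E w a b m = (if m = 0 then bcol (lst w) (oddend a b) else if m = 1 then hcol1 a b else 2)"

definition col :: "nat list set \<Rightarrow> nat" where
  "col e = (SOME k. \<exists>w a b m. e = {w @ a # replicate m b, w @ b # replicate m a} \<and> C6_adj a b \<and> k = E w a b m)"

lemma lst_app: "lst (w @ a # replicate k b) = (if k = 0 then a else b)"
  by (auto simp: lst_def last_append)

lemma E_sym: "C6_adj a b \<Longrightarrow> E w a b m = E w b a m"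
proof -
  assume ab: "C6_adj a b"
  have "oddend a b = oddend b a \<and> hcol1 a b = hcol1 b a"
    using G_sym adj6[OF ab] ab by blast
  then show ?thesis unfolding E_def by simp
qed

lemma rep_split:
  "a \<noteq> b \<Longrightarrow> a' \<noteq> b \<Longrightarrow> replicate m b @ a # xs = replicate m' b @ a' # ys \<Longrightarrow> m = m' \<and> a = a' \<and> xs = ys"
proof (induction m arbitrary: m')
  case 0 then show ?case by (cases m') auto
next
  case (Suc m) then show ?case by (cases m') auto
qed

lemma run_unique:
  assumes "a \<noteq> b" "a' \<noteq> b'" "m \<ge> 1" "m' \<ge> 1"
    "w @ a # replicate m b = w' @ a' # replicate m' b'"
  shows "w = w' \<and> a = a' \<and> m = m' \<and> b = b'"
proof -
  have "last (w @ a # replicate m b) = b" using assms(3)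
    by (simp add: last_append)
  moreover have "last (w' @ a' # replicate m' b') = b'" using assms(4)
    by (simp add: last_append)
  ultimately have bb: "b = b'" using assms(5) by simp
  have "rev (w @ a # replicate m b) = rev (w' @ a' # replicate m' b')" using assms(5) by (rule arg_cong)
  then have "replicate m b @ a # rev w = replicate m' b @ a' # rev w'" using bb by simp
  moreover have "a' \<noteq> b" using assms(2) bb by simp
  ultimately have "m = m' \<and> a = a' \<and> rev w = rev w'" using rep_split[OF assms(1)] by blast
  then show ?thesis using bb by simp
qed

lemma snoc_split:
  assumes "w @ [a] = w' @ a' # replicate m' b'" "m' \<ge> 1"
  shows "a = b' \<and> w = w' @ a' # replicate (m' - 1) b'"
proof -
  obtain k where k: "m' = Suc k" using assms(2) by (cases m') auto
  have "replicate m' b' = replicate k b' @ [b']" unfolding k by (simp add: replicate_append_same)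
  then have "w @ [a] = (w' @ a' # replicate k b') @ [b']" using assms(1) by simp
  then have "a = b' \<and> w = w' @ a' # replicate k b'" by (simp only: append1_eq_conv)
  then show ?thesis using k by simp
qed

lemma dec_unique:
  assumes "a \<noteq> b" "a' \<noteq> b'"
    "w @ a # replicate m b = w' @ a' # replicate m' b'"
    "w @ b # replicate m a = w' @ b' # replicate m' a'"
  shows "w = w' \<and> a = a' \<and> b = b' \<and> m = m'"
proof -
  have len: "length w + m = length w' + m'" using arg_cong[OF assms(3), of length] by simp
  have "length w = length w'"
  proof (rule ccontr)
    assume "length w \<noteq> length w'"
    then consider "length w < length w'" | "length w' < length w" by linarith
    then show False
    proof cases
      case 1
      have "a = w' ! length w" using arg_cong[OF assms(3), of "\<lambda>l. l ! length w"] 1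
        by (simp add: nth_append)
      moreover have "b = w' ! length w" using arg_cong[OF assms(4), of "\<lambda>l. l ! length w"] 1
        by (simp add: nth_append)
      ultimately show False using assms(1) by simp
    next
      case 2
      have "a' = w ! length w'" using arg_cong[OF assms(3), of "\<lambda>l. l ! length w'"] 2
        by (simp add: nth_append)
      moreover have "b' = w ! length w'" using arg_cong[OF assms(4), of "\<lambda>l. l ! length w'"] 2
        by (simp add: nth_append)
      ultimately show False using assms(2) by simp
    qed
  qed
  then have ww: "w = w'" and r1: "a # replicate m b = a' # replicate m' b'"
    and r2: "b # replicate m a = b' # replicate m' a'"
    using assms(3,4) by auto
  then show ?thesis using len \<open>length w = length w'\<close> by auto
qed

lemma col_eq:
  assumes "C6_adj a b"
  shows "col {w @ a # replicate m b, w @ b # replicate m a} = E w a b m"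
proof -
  let ?P = "\<lambda>k. \<exists>w' a' b' m'. {w @ a # replicate m b, w @ b # replicate m a}
     = {w' @ a' # replicate m' b', w' @ b' # replicate m' a'} \<and> C6_adj a' b' \<and> k = E w' a' b' m'"
  have ex: "?P (E w a b m)" using assms by blast
  have "\<And>k. ?P k \<Longrightarrow> k = E w a b m"
  proof -
    fix k assume "?P k"
    then obtain w' a' b' m' where eq: "{w @ a # replicate m b, w @ b # replicate m a}
     = {w' @ a' # replicate m' b', w' @ b' # replicate m' a'}" and ab': "C6_adj a' b'"
      and k: "k = E w' a' b' m'" by blast
    have ne: "a \<noteq> b" "a' \<noteq> b'" using assms ab' adj_ne by auto
    from eq consider
      "w @ a # replicate m b = w' @ a' # replicate m' b'" "w @ b # replicate m a = w' @ b' # replicate m' a'"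
      | "w @ a # replicate m b = w' @ b' # replicate m' a'" "w @ b # replicate m a = w' @ a' # replicate m' b'"
      by (auto simp: doubleton_eq_iff)
    then show "k = E w a b m"
    proof cases
      case 1
      then show ?thesis using dec_unique[OF ne 1] k by simp
    next
      case 2
      have "w = w' \<and> a = b' \<and> b = a' \<and> m = m'" using dec_unique[OF ne(1) _ 2] ne(2) by auto
      then show ?thesis using k E_sym[OF assms] by simp
    qed
  qed
  then show ?thesis unfolding col_def using someI[of ?P, OF ex] by blast
qed



lemma in_V: "x \<in> sierpinski_verts C6_verts n \<longleftrightarrow> length x = n \<and> (\<forall>c\<in>set x. c < 6)"
  unfolding sierpinski_verts_def C6_verts_def by auto

lemma lst_lt: "\<forall>c\<in>set (w @ ys). c < 6 \<Longrightarrow> lst w \<in> S6"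
proof (cases "w = []")
  case False
  assume a: "\<forall>c\<in>set (w @ ys). c < 6"
  have "last w < 6" using a last_in_set[OF False] by auto
  then show ?thesis using False lt6 unfolding lst_def by auto
qed (simp add: lst_def)

lemma E_range:
  assumes "C6_adj a b" "lst w \<in> S6"
  shows "E w a b m \<in> {1..3}"
proof -
  have "oddend a b \<in> S6" using adj6[OF assms(1)] by (simp add: oddend_def)
  then have "bcol (lst w) (oddend a b) \<in> {1,2,3}" using G_range assms(2) by blast
  moreover have "hcol1 a b \<in> {1,3}" using H_range adj6[OF assms(1)] by blast
  ultimately show ?thesis unfolding E_def by auto
qed

lemma valid:
  assumes V: "\<forall>c\<in>set y. c < 6" and
    xy: "sierpinski_adj C6_adj n x y" and yz: "sierpinski_adj C6_adj n y z" and zu: "sierpinski_adj C6_adj n z u"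
    and L: "length x = n" "length y = n" "length z = n" "length u = n"
    and ne: "x \<noteq> z" "u \<noteq> y"
  shows "col {x, y} \<noteq> col {z, u}"
proof -
  obtain w1 a1 b1 m1 where x: "x = w1 @ a1 # replicate m1 b1" and y1: "y = w1 @ b1 # replicate m1 a1"
    and ab1: "C6_adj a1 b1" using xy adj_char L by blast
  obtain w2 a2 b2 m2 where y2: "y = w2 @ a2 # replicate m2 b2" and z2: "z = w2 @ b2 # replicate m2 a2"
    and ab2: "C6_adj a2 b2" using yz adj_char L by blast
  obtain w3 a3 b3 m3 where z3: "z = w3 @ a3 # replicate m3 b3" and u3: "u = w3 @ b3 # replicate m3 a3"
    and ab3: "C6_adj a3 b3" using zu adj_char L by blast
  have c1: "col {x, y} = E w1 a1 b1 m1" using col_eq[OF ab1] x y1 by simp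
  have c3: "col {z, u} = E w3 a3 b3 m3" using col_eq[OF ab3] z3 u3 by simp
  have n1: "a1 \<noteq> b1" using ab1 adj_ne by blast
  have n2: "a2 \<noteq> b2" using ab2 adj_ne by blast
  have n3: "a3 \<noteq> b3" using ab3 adj_ne by blast
  have s1: "a1 \<in> S6" "b1 \<in> S6" using adj6[OF ab1] by auto
  have s2: "a2 \<in> S6" "b2 \<in> S6" using adj6[OF ab2] by auto
  have s3: "a3 \<in> S6" "b3 \<in> S6" using adj6[OF ab3] by auto
  show ?thesis
  proof (cases "m2 = 0")
    case True
    have y2': "y = w2 @ [a2]" and z2': "z = w2 @ [b2]" using True y2 z2 by auto
    have lw2: "lst w2 \<in> S6" using V y2' lst_lt by blast
    show ?thesis
    proof (cases "m1 = 0")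
      case m1: True
      have "w1 = w2" "b1 = a2" using y1 y2' m1 by auto
      then have x': "x = w2 @ [a1]" and ab1': "C6_adj a1 a2" using x m1 ab1 by auto
      have a1b2: "a1 \<noteq> b2" using ne(1) x' z2' by auto
      have e1: "E w1 a1 b1 m1 = bcol (lst w2) (oddend a1 a2)"
        using m1 \<open>w1 = w2\<close> \<open>b1 = a2\<close> by (simp add: E_def)
      show ?thesis
      proof (cases "m3 = 0")
        case m3: True
        have "w3 = w2" "a3 = b2" using z3 z2' m3 by auto
        then have u': "u = w2 @ [b3]" and ab3': "C6_adj b2 b3" using u3 m3 ab3 by auto
        have "b3 \<noteq> a2" using ne(2) u' y2' by auto
        have "bcol (lst w2) (oddend a1 a2) \<noteq> bcol (lst w2) (oddend b2 b3)"
          by (rule F1[rule_format, OF lw2 s1(1) s2(1) ab1' s2(2) ab2 a1b2 s3(2) ab3' \<open>b3 \<noteq> a2\<close>])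
        then show ?thesis using c1 c3 e1 m3 \<open>w3 = w2\<close> \<open>a3 = b2\<close> by (simp add: E_def)
      next
        case m3: False
        have sp: "b2 = b3 \<and> w2 = w3 @ a3 # replicate (m3 - 1) b3"
          using snoc_split[of w2 b2 w3 a3 m3 b3] z2' z3 m3 by auto
        then have lw: "lst w2 = (if m3 = 1 then a3 else b3)" using lst_app m3 by simp
        show ?thesis
        proof (cases "m3 = 1")
          case True
          have "bcol a3 (oddend a1 a2) \<noteq> hcol1 a3 b2"
            using F2b[rule_format, OF s1(1) s2(1) ab1' s2(2) ab2 a1b2 s3(1)] ab3 sp by simp
          then show ?thesis using c1 c3 e1 lw True sp by (simp add: E_def)
        next
          case False
          have "bcol b2 (oddend a1 a2) \<noteq> 2"
            by (rule F2a[rule_format, OF s1(1) s2(1) ab1' s2(2) ab2 a1b2])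
          then show ?thesis using c1 c3 e1 lw False m3 sp by (simp add: E_def)
        qed
      qed
    next
      case m1: False
      have sp1: "a2 = a1 \<and> w2 = w1 @ b1 # replicate (m1 - 1) a1"
        using snoc_split[of w2 a2 w1 b1 m1 a1] y2' y1 m1 by auto
      have lw1: "lst w2 = (if m1 = 1 then b1 else a1)" using sp1 lst_app m1 by simp
      have ab1': "C6_adj a2 b1" using ab1 sp1 by simp
      show ?thesis
      proof (cases "m3 = 0")
        case m3: True
        have "w3 = w2" "a3 = b2" using z3 z2' m3 by auto
        then have u': "u = w2 @ [b3]" and ab3': "C6_adj b2 b3" using u3 m3 ab3 by auto
        have b3a2: "b3 \<noteq> a2" using ne(2) u' y2' by auto
        have e3: "E w3 a3 b3 m3 = bcol (lst w2) (oddend b2 b3)"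
          using m3 \<open>w3 = w2\<close> \<open>a3 = b2\<close> by (simp add: E_def)
        show ?thesis
        proof (cases "m1 = 1")
          case True
          have "hcol1 a2 b1 \<noteq> bcol b1 (oddend b2 b3)"
            by (rule F3b[rule_format, OF s2(1) s2(2) ab2 s3(2) ab3' b3a2 s1(2) ab1'])
          then show ?thesis using c1 c3 e3 lw1 True sp1 by (simp add: E_def)
        next
          case False
          have "2 \<noteq> bcol a2 (oddend b2 b3)"
            by (rule F3a[rule_format, OF s2(1) s2(2) ab2 s3(2) ab3' b3a2])
          then show ?thesis using c1 c3 e3 lw1 False m1 sp1 by (simp add: E_def)
        qed
      next
        case m3: False
        have sp3: "b2 = b3 \<and> w2 = w3 @ a3 # replicate (m3 - 1) b3"
          using snoc_split[of w2 b2 w3 a3 m3 b3] z2' z3 m3 by auto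
        have eqw: "w1 @ b1 # replicate (m1 - 1) a2 = w3 @ a3 # replicate (m3 - 1) b2"
          using sp1 sp3 by simp
        show ?thesis
        proof (cases "m1 = 1")
          case m11: True
          show ?thesis
          proof (cases "m3 = 1")
            case True
            have "w1 @ [b1] = w3 @ [a3]" using eqw m11 True by simp
            then have "b1 = a3" by simp
            then have "C6_adj b1 b2" using ab3 sp3 by simp
            then have False using Tri[rule_format, OF s2(1) s1(2) ab1' s2(2)] ab2 by blast
            then show ?thesis ..
          next
            case False
            have "hcol1 a1 b1 \<in> {1,3}" by (rule H_range[rule_format, OF s1])
            then show ?thesis using c1 c3 m11 False m3 by (auto simp: E_def)
          qed
        next
          case m11: False
          show ?thesis
          proof (cases "m3 = 1")
            case True
            have "hcol1 a3 b3 \<in> {1,3}" by (rule H_range[rule_format, OF s3])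
            then show ?thesis using c1 c3 m11 True m1 by (auto simp: E_def)
          next
            case False
            have "b1 \<noteq> a2" using ab1' adj_ne by metis
            moreover have "a3 \<noteq> b2" using n3 sp3 by simp
            moreover have "m1 - 1 \<ge> 1" "m3 - 1 \<ge> 1" using m1 m11 m3 False by auto
            ultimately have "a2 = b2" using run_unique[of b1 a2 a3 b2 "m1 - 1" "m3 - 1" w1 w3] eqw by blast
            then show ?thesis using n2 by simp
          qed
        qed
      qed
    qed
  next
    case m2: False
    show ?thesis
    proof (cases "m1 = 0")
      case m1: False
      have "w1 = w2 \<and> b1 = a2 \<and> m1 = m2 \<and> a1 = b2"
        using run_unique[of b1 a1 a2 b2 m1 m2 w1 w2] n1 n2 m1 m2 y1 y2 by auto
      then have "x = z" using x z2 by simp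
      then show ?thesis using ne(1) by simp
    next
      case m1: True
      have sp1: "b1 = b2 \<and> w1 = w2 @ a2 # replicate (m2 - 1) b2"
        using snoc_split[of w1 b1 w2 a2 m2 b2] y1 y2 m1 m2 by auto
      have x': "x = w1 @ [a1]" using x m1 by simp
      have lw1: "lst w1 = (if m2 = 1 then a2 else b2)" using sp1 lst_app m2 by simp
      have e1: "E w1 a1 b1 m1 = bcol (lst w1) (oddend a1 b2)" using m1 sp1 by (simp add: E_def)
      show ?thesis
      proof (cases "m3 = 0")
        case m3: False
        have "w3 = w2 \<and> a3 = b2 \<and> m3 = m2 \<and> b3 = a2"
          using run_unique[of a3 b3 b2 a2 m3 m2 w3 w2] n3 n2 m3 m2 z3 z2 by auto
        then have "u = y" using u3 y2 by simp
        then show ?thesis using ne(2) by simp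
      next
        case m3: True
        have sp3: "a3 = a2 \<and> w3 = w2 @ b2 # replicate (m2 - 1) a2"
          using snoc_split[of w3 a3 w2 b2 m2 a2] z3 z2 m3 m2 by auto
        have lw3: "lst w3 = (if m2 = 1 then b2 else a2)" using sp3 lst_app m2 by simp
        have e3: "E w3 a3 b3 m3 = bcol (lst w3) (oddend a2 b3)" using m3 sp3 by (simp add: E_def)
        have ab1': "C6_adj a1 b2" using ab1 sp1 by simp
        have ab3': "C6_adj a2 b3" using ab3 sp3 by simp
        show ?thesis
        proof (cases "m2 = 1")
          case True
          have "bcol a2 (oddend a1 b2) \<noteq> bcol b2 (oddend a2 b3)"
            by (rule F4a[rule_format, OF s2(1) s2(2) ab2 s1(1) ab1' s3(2) ab3'])
          then show ?thesis using c1 c3 e1 e3 lw1 lw3 True by simp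
        next
          case False
          have "bcol b2 (oddend a1 b2) \<noteq> bcol a2 (oddend a2 b3)"
            by (rule F4b[rule_format, OF s2(1) s2(2) ab2 s1(1) ab1' s3(2) ab3'])
          then show ?thesis using c1 c3 e1 e3 lw1 lw3 False by simp
        qed
      qed
    qed
  qed
qed


lemma vert_i: "n \<ge> 1 \<Longrightarrow> i < 6 \<Longrightarrow> replicate (n - 1) 0 @ [i] \<in> sierpinski_verts C6_verts n"
  unfolding in_V by auto

lemma adj_i: "n \<ge> 1 \<Longrightarrow> C6_adj i j \<Longrightarrow>
   sierpinski_adj C6_adj n (replicate (n - 1) 0 @ [i]) (replicate (n - 1) 0 @ [j])"
proof -
  assume "n \<ge> 1" "C6_adj i j"
  then have "replicate (n - 1) 0 @ [i] = replicate (n - 1) 0 @ i # replicate 0 j \<and>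
     replicate (n - 1) 0 @ [j] = replicate (n - 1) 0 @ j # replicate 0 i \<and> C6_adj i j" by simp
  then have "\<exists>w a b m. replicate (n - 1) 0 @ [i] = w @ a # replicate m b \<and>
     replicate (n - 1) 0 @ [j] = w @ b # replicate m a \<and> C6_adj a b" by blast
  then show ?thesis using adj_char[of "replicate (n - 1) 0 @ [i]" n "replicate (n - 1) 0 @ [j]"]
    \<open>n \<ge> 1\<close> by simp
qed

theorem mainTheorem9:
  fixes n :: nat
  assumes "n \<ge> 1"
  shows "inj_chromatic_index (sierpinski_verts C6_verts n) (sierpinski_adj C6_adj n) = 3"
  unfolding inj_chromatic_index_def
proof (rule Least_equality)
  show "\<exists>c. inj_edge_coloring (sierpinski_verts C6_verts n) (sierpinski_adj C6_adj n) c 3"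
  proof (intro exI[of _ col], unfold inj_edge_coloring_def, intro conjI ballI impI)
    fix x y assume xV: "x \<in> sierpinski_verts C6_verts n" and yV: "y \<in> sierpinski_verts C6_verts n"
      and xy: "sierpinski_adj C6_adj n x y"
    obtain w a b m where x: "x = w @ a # replicate m b" and y: "y = w @ b # replicate m a"
      and ab: "C6_adj a b" using xy adj_char xV yV unfolding in_V by blast
    have "lst w \<in> S6" using xV x lst_lt unfolding in_V by blast
    then show "col {x, y} \<in> {1..3}" using col_eq[OF ab] E_range[OF ab] x y by simp
  next
    fix x y z u
    assume V: "x \<in> sierpinski_verts C6_verts n" "y \<in> sierpinski_verts C6_verts n"
      "z \<in> sierpinski_verts C6_verts n" "u \<in> sierpinski_verts C6_verts n"
      and H: "sierpinski_adj C6_adj n x y \<and> sierpinski_adj C6_adj n y z \<and> sierpinski_adj C6_adj n z u \<and>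
          x \<noteq> y \<and> y \<noteq> z \<and> x \<noteq> z \<and> u \<noteq> y \<and> u \<noteq> z"
    show "col {x, y} \<noteq> col {z, u}"
      using valid[of y n x z u] V H unfolding in_V by blast
  qed
next
  fix k assume "\<exists>c. inj_edge_coloring (sierpinski_verts C6_verts n) (sierpinski_adj C6_adj n) c k"
  then obtain c where C: "inj_edge_coloring (sierpinski_verts C6_verts n) (sierpinski_adj C6_adj n) c k"
    by blast
  define v where "v i = replicate (n - 1) 0 @ [i]" for i :: nat
  have vV: "\<And>i. i < 6 \<Longrightarrow> v i \<in> sierpinski_verts C6_verts n" using vert_i assms v_def by simp
  have vA: "\<And>i j. C6_adj i j \<Longrightarrow> sierpinski_adj C6_adj n (v i) (v j)" using adj_i assms v_def by simp
  have vinj: "\<And>i j. v i = v j \<longleftrightarrow> i = j" unfolding v_def by simp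
  have A: "C6_adj 0 1" "C6_adj 1 2" "C6_adj 2 3" "C6_adj 3 4" "C6_adj 4 5" "C6_adj 5 0"
    by (simp_all add: C6_adj_def)
  have rng: "\<forall>x\<in>sierpinski_verts C6_verts n. \<forall>y\<in>sierpinski_verts C6_verts n.
      sierpinski_adj C6_adj n x y \<longrightarrow> c {x, y} \<in> {1..k}"
    and inj2: "\<forall>x\<in>sierpinski_verts C6_verts n. \<forall>y\<in>sierpinski_verts C6_verts n.
      \<forall>z\<in>sierpinski_verts C6_verts n. \<forall>u\<in>sierpinski_verts C6_verts n.
        sierpinski_adj C6_adj n x y \<and> sierpinski_adj C6_adj n y z \<and> sierpinski_adj C6_adj n z u \<and>
        x \<noteq> y \<and> y \<noteq> z \<and> x \<noteq> z \<and> u \<noteq> y \<and> u \<noteq> z \<longrightarrow> c {x, y} \<noteq> c {z, u}"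
    using C unfolding inj_edge_coloring_def by blast+
  have F: "sierpinski_adj C6_adj n (v 0) (v 1)" "sierpinski_adj C6_adj n (v 1) (v 2)"
    "sierpinski_adj C6_adj n (v 2) (v 3)" "sierpinski_adj C6_adj n (v 3) (v 4)"
    "sierpinski_adj C6_adj n (v 4) (v 5)" "sierpinski_adj C6_adj n (v 5) (v 0)"
    using vA A by auto
  have W: "v 0 \<in> sierpinski_verts C6_verts n" "v 1 \<in> sierpinski_verts C6_verts n"
    "v 2 \<in> sierpinski_verts C6_verts n" "v 3 \<in> sierpinski_verts C6_verts n"
    "v 4 \<in> sierpinski_verts C6_verts n" "v 5 \<in> sierpinski_verts C6_verts n"
    using vV by auto
  have d1: "c {v 0, v 1} \<noteq> c {v 2, v 3}"
    apply (rule inj2[rule_format]) apply (rule W)+ apply (intro conjI) apply (rule F)+ by (simp_all add: vinj)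
  have d2: "c {v 2, v 3} \<noteq> c {v 4, v 5}"
    apply (rule inj2[rule_format]) apply (rule W)+ apply (intro conjI) apply (rule F)+ by (simp_all add: vinj)
  have d3: "c {v 4, v 5} \<noteq> c {v 0, v 1}"
    apply (rule inj2[rule_format]) apply (rule W)+ apply (intro conjI) apply (rule F)+ by (simp_all add: vinj)
  have r1: "c {v 0, v 1} \<in> {1..k}" using rng W F by blast
  have r2: "c {v 2, v 3} \<in> {1..k}" using rng W F by blast
  have r3: "c {v 4, v 5} \<in> {1..k}" using rng W F by blast
  show "3 \<le> k"
  proof (rule ccontr)
    assume "\<not> 3 \<le> k"
    then show False using r1 r2 r3 d1 d2 d3 by auto
  qed
qed


end
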